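(* Let $n\ge 3$ and $k\ge 1$. Let $G=C_n$ be the cycle $g_1g_2\cdots g_ng_1$ and let $H=C_{3k+1}$ have vertex set $\{1,2,\dots,3k+1\}$ with $i$ adjacent to $i+1$ for $1\le i\le 3k$ and $3k+1$ adjacent to $1$. Define $f\colon V(G)\to V(H)$ by $f(g_i)=1$ if $i\bmod 4\in\{1,2\}$ and $f(g_i)=3$ otherwise ($i\in\{1,\dots,n\}$). Then \[ \gamma(G\otimes_f H)\le kn+\left\lceil \frac n4\right\rceil-\left\lfloor \frac n4\right\rfloor . \]
   Context: $\gamma$ denotes the domination number. For graphs $G,H$ and a function $f\colon V(G)\to V(H)$, the Sierpiński product $G\otimes_f H$ is the graph with vertex set $V(G)\times V(H)$ and edges of two types: (type 1) $(g,h)(g,h')$ for every $g\in V(G)$ and every edge $hh'\in E(H)$; (type 2) $(g,f(g'))(g',f(g))$ for every edge $gg'\in E(G)$. *)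

theory Defs
  imports Complex_Main
begin

text \<open>A simple graph is given by a vertex set V and a symmetric, irreflexive
adjacency predicate E (only its values on V x V matter).\<close>

definition dominating_set :: "'a set \<Rightarrow> ('a \<Rightarrow> 'a \<Rightarrow> bool) \<Rightarrow> 'a set \<Rightarrow> bool" where
  "dominating_set V E D \<longleftrightarrow> D \<subseteq> V \<and> (\<forall>v\<in>V. v \<in> D \<or> (\<exists>u\<in>D. E u v))"

definition domination_number :: "'a set \<Rightarrow> ('a \<Rightarrow> 'a \<Rightarrow> bool) \<Rightarrow> nat" where
  "domination_number V E = Min (card ` {D. dominating_set V E D})"

definition sierpinski_verts :: "'a set \<Rightarrow> 'b set \<Rightarrow> ('a \<times> 'b) set" where
  "sierpinski_verts VG VH = VG \<times> VH"

definition sierpinski_edge ::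
  "'a set \<Rightarrow> ('a \<Rightarrow> 'a \<Rightarrow> bool) \<Rightarrow> 'b set \<Rightarrow> ('b \<Rightarrow> 'b \<Rightarrow> bool) \<Rightarrow> ('a \<Rightarrow> 'b)
     \<Rightarrow> ('a \<times> 'b) \<Rightarrow> ('a \<times> 'b) \<Rightarrow> bool" where
  "sierpinski_edge VG EG VH EH f x y \<longleftrightarrow>
     (fst x = fst y \<and> fst x \<in> VG \<and> snd x \<in> VH \<and> snd y \<in> VH \<and> EH (snd x) (snd y)) \<or>
     (\<exists>g\<in>VG. \<exists>g'\<in>VG. EG g g' \<and> x = (g, f g') \<and> y = (g', f g))"

definition cycle_verts :: "nat \<Rightarrow> nat set" where
  "cycle_verts m = {1..m}"

definition cycle_adj :: "nat \<Rightarrow> nat \<Rightarrow> nat \<Rightarrow> bool" where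
  "cycle_adj m i j \<longleftrightarrow> i \<in> {1..m} \<and> j \<in> {1..m} \<and>
     (j = i + 1 \<or> i = j + 1 \<or> (i = m \<and> j = 1) \<or> (i = 1 \<and> j = m)) \<and> i \<noteq> j"

end

theory Submission
  imports Defs
begin

definition setA :: "nat \<Rightarrow> nat set" where "setA k = (\<lambda>j. 3*j) ` {1..k}"
definition setB :: "nat \<Rightarrow> nat set" where "setB k = insert 1 ((\<lambda>j. 3*j+2) ` {1..k-1})"
definition tB :: "nat \<Rightarrow> bool" where "tB i \<longleftrightarrow> i mod 4 = 0 \<or> i mod 4 = 1"
definition setS :: "nat \<Rightarrow> nat \<Rightarrow> nat set" where "setS k i = (if tB i then setB k else setA k)"

lemma A_iff: "h \<in> setA k \<longleftrightarrow> (h mod 3 = 0 \<and> 3 \<le> h \<and> h \<le> 3*k)"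
proof
  assume "h \<in> setA k" thus "h mod 3 = 0 \<and> 3 \<le> h \<and> h \<le> 3*k" by (auto simp: setA_def)
next
  assume h: "h mod 3 = 0 \<and> 3 \<le> h \<and> h \<le> 3*k"
  hence "h = 3 * (h div 3)" "h div 3 \<in> {1..k}" by auto
  thus "h \<in> setA k" unfolding setA_def by (metis image_eqI)
qed

lemma B_iff: "h \<in> setB k \<longleftrightarrow> (h = 1 \<or> (h mod 3 = 2 \<and> 5 \<le> h \<and> h + 1 \<le> 3*k))"
proof
  assume "h \<in> setB k"
  then consider "h = 1" | x where "h = 3*x+2" "1 \<le> x" "x \<le> k - 1" unfolding setB_def by auto
  thus "h = 1 \<or> (h mod 3 = 2 \<and> 5 \<le> h \<and> h + 1 \<le> 3*k)"
  proof cases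
    case 1 thus ?thesis by simp
  next
    case 2
    have "(3*x+2) mod 3 = 2" by presburger
    thus ?thesis using 2 by auto
  qed
next
  assume h: "h = 1 \<or> (h mod 3 = 2 \<and> 5 \<le> h \<and> h + 1 \<le> 3*k)"
  show "h \<in> setB k"
  proof (cases "h = 1")
    case True thus ?thesis by (simp add: setB_def)
  next
    case False
    with h have "h mod 3 = 2" by simp
    hence "h = 3 * (h div 3) + 2" by (metis mult_div_mod_eq)
    moreover have "h div 3 \<in> {1..k-1}" using h False by auto
    ultimately show ?thesis unfolding setB_def by (metis image_eqI insertI2)
  qed
qed

lemma card_A: "card (setA k) = k"
  unfolding setA_def by (subst card_image) (auto simp: inj_on_def)

lemma card_B: "k \<ge> 1 \<Longrightarrow> card (setB k) = k"
  unfolding setB_def by (subst card_insert_disjoint) (auto simp: card_image inj_on_def)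

lemma S_sub: "k \<ge> 1 \<Longrightarrow> setS k i \<subseteq> {1..3*k+1}"
  by (auto simp: setS_def A_iff B_iff)

lemma card_S: "k \<ge> 1 \<Longrightarrow> card (setS k i) = k"
  by (simp add: setS_def card_A card_B)

lemma inner_dom:
  assumes k: "k \<ge> 1" and h: "h \<in> {1..3*k+1}"
    and nb: "tB i \<Longrightarrow> h \<noteq> 3" and na: "\<not> tB i \<Longrightarrow> h \<noteq> 1"
  shows "\<exists>h'. h' \<in> setS k i \<and> (h' = h \<or> cycle_adj (3*k+1) h' h)"
proof -
  define q where "q = h div 3"
  define r where "r = h mod 3"
  have hq: "h = 3*q + r" unfolding q_def r_def by simp
  have r3: "r = 0 \<or> r = 1 \<or> r = 2" unfolding r_def by arith
  have h1: "1 \<le> h" "h \<le> 3*k+1" using h by auto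
  have m0: "(3*x) mod 3 = 0" "(3*x+1) mod 3 = 1" "(3*x+2) mod 3 = 2" for x :: nat by presburger+
  show ?thesis
  proof (cases "tB i")
    case True
    hence S: "setS k i = setB k" by (simp add: setS_def)
    have "h \<noteq> 3" using nb True by simp
    show ?thesis
    proof -
      { assume r: "r = 0"
        hence q2: "q \<ge> 2" "q \<le> k" using hq h1 \<open>h \<noteq> 3\<close> by auto
        have w: "3*(q-1)+2 \<in> setB k" unfolding B_iff using m0(3)[of "q-1"] q2 by auto
        have "cycle_adj (3*k+1) (3*(q-1)+2) h" unfolding cycle_adj_def using q2 hq r by auto
        hence ?thesis using w S by blast }
      moreover
      { assume r: "r = 1" "q = 0"
        hence "h \<in> setB k" using hq by (simp add: B_iff)
        hence ?thesis using S by blast }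
      moreover
      { assume r: "r = 1" "q = k"
        have "cycle_adj (3*k+1) 1 h" unfolding cycle_adj_def using r hq k by auto
        hence ?thesis using S by (auto simp: B_iff) }
      moreover
      { assume r: "r = 1" "q \<noteq> 0" "q \<noteq> k"
        hence q2: "1 \<le> q" "q+1 \<le> k" using hq h1 by auto
        have w: "3*q+2 \<in> setB k" unfolding B_iff using m0(3)[of q] q2 by auto
        have "cycle_adj (3*k+1) (3*q+2) h" unfolding cycle_adj_def using q2 hq r by auto
        hence ?thesis using w S by blast }
      moreover
      { assume r: "r = 2" "q = 0"
        have "cycle_adj (3*k+1) 1 h" unfolding cycle_adj_def using r hq k by auto
        hence ?thesis using S by (auto simp: B_iff) }
      moreover
      { assume r: "r = 2" "q \<noteq> 0"
        hence q2: "1 \<le> q" "q+1 \<le> k" using hq h1 by auto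
        have "h \<in> setB k" unfolding B_iff using m0(3)[of q] q2 hq r by auto
        hence ?thesis using S by blast }
      ultimately show ?thesis using r3 by blast
    qed
  next
    case False
    hence S: "setS k i = setA k" by (simp add: setS_def)
    have "h \<noteq> 1" using na False by simp
    { assume r: "r = 0"
      hence "h \<in> setA k" unfolding A_iff using hq h1 m0(1)[of q] by auto
      hence ?thesis using S by blast }
    moreover
    { assume r: "r = 1"
      hence q2: "1 \<le> q" "q \<le> k" using hq h1 \<open>h \<noteq> 1\<close> by auto
      have w: "3*q \<in> setA k" unfolding A_iff using m0(1)[of q] q2 by auto
      have "cycle_adj (3*k+1) (3*q) h" unfolding cycle_adj_def using q2 hq r by auto
      hence ?thesis using w S by blast }
    moreover
    { assume r: "r = 2"
      hence q2: "q+1 \<le> k" using hq h1 by auto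
      have w: "3*(q+1) \<in> setA k" unfolding A_iff using m0(1)[of "q+1"] q2 by auto
      have "cycle_adj (3*k+1) (3*(q+1)) h" unfolding cycle_adj_def using q2 hq r by auto
      hence ?thesis using w S by blast }
    ultimately show ?thesis using r3 by blast
  qed
qed

lemma ceil_floor:
  "\<lceil>real n / 4\<rceil> - \<lfloor>real n / 4\<rfloor> = (if 4 dvd n then 0 else 1)"
proof -
  obtain q r where n: "n = 4*q + r" "r < 4" by (metis div_mod_decomp mod_less_divisor zero_less_numeral mult.commute)
  have fl: "\<lfloor>real n / 4\<rfloor> = int q"
    using n by (subst floor_eq_iff) auto
  show ?thesis
  proof (cases "r = 0")
    case True
    hence "real n / 4 = real q" using n by simp
    thus ?thesis using n True by simp
  next
    case False
    have "\<lceil>real n / 4\<rceil> = int q + 1"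
      using n False by (subst ceiling_eq_iff) auto
    moreover have "\<not> 4 dvd n" using n False by presburger
    ultimately show ?thesis using fl by simp
  qed
qed

lemma cross:
  assumes f: "\<And>i. f i = (if i mod 4 \<in> {1, 2} then 1 else (3::nat))"
    and k: "k \<ge> 1" and i: "2 \<le> i"
    and h: "(tB i \<and> h = 3) \<or> (\<not> tB i \<and> h = 1)"
  shows "f (i-1) = h \<and> f i \<in> setS k (i-1)"
proof -
  have A3: "3 \<in> setA k" using k by (simp add: A_iff)
  have B1: "1 \<in> setB k" by (simp add: B_iff)
  obtain j where j: "i = j + 1" using i by (metis add.commute le_Suc_ex one_add_one add.assoc)
  have ij: "i - 1 = j" using j by simp
  have c: "j mod 4 = 0 \<or> j mod 4 = 1 \<or> j mod 4 = 2 \<or> j mod 4 = 3" by arith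
  have s: "(j+1) mod 4 = (if j mod 4 = 3 then 0 else j mod 4 + 1)" by (simp add: mod_Suc)
  show ?thesis unfolding ij using c h A3 B1 unfolding j f tB_def setS_def s by auto
qed

lemma dom_main:
  assumes n: "n \<ge> 3" and k: "k \<ge> 1"
    and f: "\<And>i. f i = (if i mod 4 \<in> {1, 2} then 1 else (3::nat))"
  defines "D0 \<equiv> Sigma {1..n} (setS k)"
  shows "dominating_set (sierpinski_verts (cycle_verts n) (cycle_verts (3 * k + 1)))
            (sierpinski_edge (cycle_verts n) (cycle_adj n)
                             (cycle_verts (3 * k + 1)) (cycle_adj (3 * k + 1)) f)
            (if 4 dvd n then D0 else insert (1,3) D0)"
    (is "dominating_set ?V ?E ?D")
proof -
  have fv: "f j \<in> {1..3*k+1}" for j using k by (auto simp: f)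
  have D0sub: "D0 \<subseteq> ?V" using S_sub[OF k] by (auto simp: D0_def sierpinski_verts_def cycle_verts_def)
  have sub: "?D \<subseteq> ?V" using D0sub n k by (auto simp: sierpinski_verts_def cycle_verts_def)
  have sub0: "D0 \<subseteq> ?D" by auto
  have edge: "?E (i-1, f i) (i, f (i-1))" if "2 \<le> i" "i \<le> n" for i
    unfolding sierpinski_edge_def
    apply (rule disjI2)
    apply (rule bexI[of _ "i-1"], rule bexI[of _ i])
    using that fv by (auto simp: cycle_verts_def cycle_adj_def)
  have edge1: "?E (n, f 1) (1, f n)"
    unfolding sierpinski_edge_def
    apply (rule disjI2)
    apply (rule bexI[of _ n], rule bexI[of _ 1])
    using n by (auto simp: cycle_verts_def cycle_adj_def)
  have main: "\<exists>u\<in>?D. ?E u (i,h)" if v: "(i,h) \<in> ?V" "(i,h) \<notin> ?D" for i h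
  proof -
    have i: "1 \<le> i" "i \<le> n" and h: "h \<in> {1..3*k+1}" using v by (auto simp: sierpinski_verts_def cycle_verts_def)
    show ?thesis
    proof (cases "(tB i \<and> h = 3) \<or> (\<not> tB i \<and> h = 1)")
      case True
      show ?thesis
      proof (cases "i = 1")
        case i1: True
        hence hh: "h = 3" using True by (auto simp: tB_def)
        show ?thesis
        proof (cases "4 dvd n")
          case True
          have "f 1 = 1" "f n = 3" using True by (auto simp: f)
          moreover have "(n, 1) \<in> D0" using True n k by (auto simp: D0_def setS_def tB_def B_iff)
          ultimately show ?thesis using edge1 i1 hh True by force
        next
          case False thus ?thesis using v i1 hh by simp
        qed
      next
        case False
        hence i2: "2 \<le> i" using i by simp
        from cross[OF f k i2 True] have "f (i-1) = h" "f i \<in> setS k (i-1)" by auto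
        hence "(i-1, f i) \<in> D0" using i2 i by (auto simp: D0_def)
        thus ?thesis using edge[OF i2 i(2)] \<open>f (i-1) = h\<close> sub0 by force
      qed
    next
      case False
      then obtain h' where h': "h' \<in> setS k i" "h' = h \<or> cycle_adj (3*k+1) h' h"
        using inner_dom[OF k h] by blast
      hence "(i,h') \<in> D0" using i by (auto simp: D0_def)
      moreover have "h' \<noteq> h" using h' v(2) \<open>(i,h') \<in> D0\<close> sub0 by auto
      moreover have "h' \<in> {1..3*k+1}" using h'(1) S_sub[OF k, of i] by blast
      ultimately show ?thesis using h' i h sub0
        by (intro bexI[of _ "(i,h')"]) (auto simp: sierpinski_edge_def cycle_verts_def)
    qed
  qed
  show ?thesis unfolding dominating_set_def
  proof (intro conjI sub ballI)
    fix v assume "v \<in> ?V"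
    then obtain i h where "v = (i,h)" "(i,h) \<in> ?V" by (cases v) auto
    thus "v \<in> ?D \<or> (\<exists>u\<in>?D. ?E u v)" using main by blast
  qed
qed

theorem mainTheorem9:
  fixes n k :: nat and f :: "nat \<Rightarrow> nat"
  assumes "n \<ge> 3" and "k \<ge> 1"
    and "\<And>i. f i = (if i mod 4 \<in> {1, 2} then 1 else 3)"
  shows "int (domination_number
            (sierpinski_verts (cycle_verts n) (cycle_verts (3 * k + 1)))
            (sierpinski_edge (cycle_verts n) (cycle_adj n)
                             (cycle_verts (3 * k + 1)) (cycle_adj (3 * k + 1)) f))
         \<le> int (k * n) + \<lceil>real n / 4\<rceil> - \<lfloor>real n / 4\<rfloor>"
proof -
  define D0 where "D0 = Sigma {1..n} (setS k)"
  define D where "D = (if 4 dvd n then D0 else insert (1,3) D0)"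
  let ?V = "sierpinski_verts (cycle_verts n) (cycle_verts (3 * k + 1))"
  let ?E = "sierpinski_edge (cycle_verts n) (cycle_adj n)
                             (cycle_verts (3 * k + 1)) (cycle_adj (3 * k + 1)) f"
  have dom: "dominating_set ?V ?E D"
    unfolding D_def D0_def by (rule dom_main[OF assms])
  have c0: "card D0 = k * n"
    unfolding D0_def using card_S[OF assms(2)]
    by (subst card_SigmaI) (auto simp: setS_def setA_def setB_def)
  have fin0: "finite D0" unfolding D0_def by (auto simp: setS_def setA_def setB_def)
  have cD: "card D \<le> k * n + (if 4 dvd n then 0 else 1)"
    using c0 fin0 by (auto simp: D_def card_insert_if)
  have finV: "finite ?V" by (simp add: sierpinski_verts_def cycle_verts_def)
  have "{D. dominating_set ?V ?E D} \<subseteq> Pow ?V" by (auto simp: dominating_set_def)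
  hence fin: "finite (card ` {D. dominating_set ?V ?E D})"
    using finV by (meson finite_Pow_iff finite_imageI finite_subset)
  have "domination_number ?V ?E \<le> card D"
    unfolding domination_number_def using fin dom by (intro Min_le) auto
  hence "domination_number ?V ?E \<le> k*n + (if 4 dvd n then 0 else 1)"
    using cD by linarith
  hence "int (domination_number ?V ?E) \<le> int (k*n + (if 4 dvd n then 0 else 1))"
    by (simp only: of_nat_le_iff)
  thus ?thesis using ceil_floor[of n] by (cases "4 dvd n") simp_all
qed

end
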